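(* Let $K$ be a positive semiring and let $R$ and $S$ be $K$-relations over finite sets of attributes $X$ and $Y$, and put $Z=X\cap Y$. Then for every $r\in R'\ltimes S'$ we have $(R\Join S)[X](r)=c^*_{S,Z}\,R(r)$.
   Context: A commutative semiring $(K,+,\cdot,0,1)$ with $0\neq 1$ is positive if $a+b=0$ implies $a=b=0$, and $ab=0$ implies $a=0$ or $b=0$. Each attribute $A$ has a domain $\mathrm{Dom}(A)$. For a finite set of attributes $X$, $\mathrm{Tup}(X)$ is the set of maps assigning to each $A\in X$ an element of $\mathrm{Dom}(A)$; for $Y\subseteq X$, $t[Y]$ is the restriction of $t$ to $Y$; $XY$ denotes $X\cup Y$. A $K$-relation over $X$ is a map $R:\mathrm{Tup}(X)\to K$ with finite support $R'=\{t: R(t)\neq 0\}$. For $Y\subseteq X$, the marginal $R[Y]$ is the $K$-relation over $Y$ with $R[Y](u)=\sum_{r\in R',\, r[Y]=u} R(r)$. For a $K$-relation $T$ over $Y$, $Z\subseteq Y$ and $u\in\mathrm{Tup}(Z)$, set $c^*_{T,Z}=\prod_{v\in T[Z]'}T[Z](v)$ and $c_T(u)=\prod_{v\in T[Z]',\, v\neq u}T[Z](v)$ (empty products equal $1$). The join of $K$-relations $R$ over $X$ and $S$ over $Y$ is the $K$-relation over $XY$ defined by $(R\Join S)(t)=R(t[X])\,S(t[Y])\,c_S(t[X\cap Y])$, with $Z=X\cap Y$. For ordinary relations $P\subseteq\mathrm{Tup}(X)$, $Q\subseteq\mathrm{Tup}(Y)$, $P\Join Q$ is the set of $t\in\mathrm{Tup}(XY)$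 with $t[X]\in P$ and $t[Y]\in Q$, and the semijoin is $P\ltimes Q=\{t[X]: t\in P\Join Q\}$. *)

theory Defs
  imports Main
begin

definition Tup :: "('a \<Rightarrow> 'v set) \<Rightarrow> 'a set \<Rightarrow> ('a \<rightharpoonup> 'v) set" where
  "Tup Dom X = {t. dom t = X \<and> (\<forall>A\<in>X. the (t A) \<in> Dom A)}"

definition positive_semiring :: "'k::comm_semiring_1 itself \<Rightarrow> bool" where
  "positive_semiring _ \<longleftrightarrow>
     (\<forall>a b :: 'k. a + b = 0 \<longrightarrow> a = 0 \<and> b = 0) \<and>
     (\<forall>a b :: 'k. a * b = 0 \<longrightarrow> a = 0 \<or> b = 0)"

definition supp :: "(('a \<rightharpoonup> 'v) \<Rightarrow> 'k::zero) \<Rightarrow> ('a \<rightharpoonup> 'v) set" where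
  "supp R = {t. R t \<noteq> 0}"

definition is_Krel :: "('a \<Rightarrow> 'v set) \<Rightarrow> 'a set \<Rightarrow> (('a \<rightharpoonup> 'v) \<Rightarrow> 'k::zero) \<Rightarrow> bool" where
  "is_Krel Dom X R \<longleftrightarrow> finite (supp R) \<and> supp R \<subseteq> Tup Dom X"

definition marg :: "(('a \<rightharpoonup> 'v) \<Rightarrow> 'k::comm_monoid_add) \<Rightarrow> 'a set \<Rightarrow> ('a \<rightharpoonup> 'v) \<Rightarrow> 'k" where
  "marg R Y u = (\<Sum>r\<in>{r\<in>supp R. r |` Y = u}. R r)"

definition cstar :: "(('a \<rightharpoonup> 'v) \<Rightarrow> 'k::comm_semiring_1) \<Rightarrow> 'a set \<Rightarrow> 'k" where
  "cstar T Z = (\<Prod>v\<in>supp (marg T Z). marg T Z v)"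

definition cfac :: "(('a \<rightharpoonup> 'v) \<Rightarrow> 'k::comm_semiring_1) \<Rightarrow> 'a set \<Rightarrow> ('a \<rightharpoonup> 'v) \<Rightarrow> 'k" where
  "cfac T Z u = (\<Prod>v\<in>supp (marg T Z) - {u}. marg T Z v)"

definition Kjoin :: "('a \<Rightarrow> 'v set) \<Rightarrow> 'a set \<Rightarrow> 'a set \<Rightarrow> (('a \<rightharpoonup> 'v) \<Rightarrow> 'k::comm_semiring_1)
    \<Rightarrow> (('a \<rightharpoonup> 'v) \<Rightarrow> 'k) \<Rightarrow> ('a \<rightharpoonup> 'v) \<Rightarrow> 'k" where
  "Kjoin Dom X Y R S t =
     (if t \<in> Tup Dom (X \<union> Y)
      then R (t |` X) * S (t |` Y) * cfac S (X \<inter> Y) (t |` (X \<inter> Y))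
      else 0)"

definition rjoin :: "('a \<Rightarrow> 'v set) \<Rightarrow> 'a set \<Rightarrow> 'a set \<Rightarrow> ('a \<rightharpoonup> 'v) set
    \<Rightarrow> ('a \<rightharpoonup> 'v) set \<Rightarrow> ('a \<rightharpoonup> 'v) set" where
  "rjoin Dom X Y P Q = {t \<in> Tup Dom (X \<union> Y). t |` X \<in> P \<and> t |` Y \<in> Q}"

definition semijoin :: "('a \<Rightarrow> 'v set) \<Rightarrow> 'a set \<Rightarrow> 'a set \<Rightarrow> ('a \<rightharpoonup> 'v) set
    \<Rightarrow> ('a \<rightharpoonup> 'v) set \<Rightarrow> ('a \<rightharpoonup> 'v) set" where
  "semijoin Dom X Y P Q = (\<lambda>t. t |` X) ` rjoin Dom X Y P Q"

end

theory Submission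
  imports Defs
begin

lemma sum_zero_pos:
  fixes f :: "'b \<Rightarrow> 'k::comm_semiring_1"
  assumes P: "positive_semiring TYPE('k)" and fin: "finite A"
  shows "sum f A = 0 \<Longrightarrow> x \<in> A \<Longrightarrow> f x = 0"
  using fin
proof (induction A rule: finite_induct)
  case empty then show ?case by simp
next
  case (insert a A)
  have "f a + sum f A = 0" using insert by simp
  then have "f a = 0 \<and> sum f A = 0" using P unfolding positive_semiring_def by blast
  then show ?case using insert by auto
qed

lemma restr_add_Y:
  assumes "dom s = Y" shows "(r ++ s) |` Y = s"
  using assms by (auto simp: restrict_map_def map_add_def fun_eq_iff split: option.splits)

lemma restr_add_X:
  assumes "dom s = Y" "dom r = X" "s |` (X \<inter> Y) = r |` (X \<inter> Y)"
  shows "(r ++ s) |` X = r"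
proof (rule ext)
  fix x
  show "((r ++ s) |` X) x = r x"
  proof (cases "x \<in> X")
    case True
    show ?thesis
    proof (cases "x \<in> Y")
      case True2: True
      have "(s |` (X \<inter> Y)) x = (r |` (X \<inter> Y)) x" using assms(3) by simp
      then have "s x = r x" using True True2 by (simp add: restrict_map_def)
      moreover have "s x \<noteq> None" using True2 assms(1) by auto
      ultimately show ?thesis using True by (auto simp: map_add_def split: option.splits)
    next
      case False
      then have "s x = None" using assms(1) by auto
      then show ?thesis using True by (simp add: map_add_def)
    qed
  next
    case False
    then show ?thesis using assms(2) by auto
  qed
qed

lemma decomp:
  assumes "dom t = X \<union> Y" "t |` X = r"
  shows "t = r ++ (t |` Y)"
proof (rule ext)
  fix x
  show "t x = (r ++ (t |` Y)) x"
    using assms by (cases "x \<in> Y"; cases "x \<in> X") (auto simp: map_add_def restrict_map_def split: option.splits)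
qed

theorem lemma5:
  fixes Dom :: "'a \<Rightarrow> 'v set"
    and X Y :: "'a set"
    and R S :: "('a \<rightharpoonup> 'v) \<Rightarrow> 'k::comm_semiring_1"
    and r :: "'a \<rightharpoonup> 'v"
  assumes "positive_semiring TYPE('k)"
    and "finite X" and "finite Y"
    and "is_Krel Dom X R" and "is_Krel Dom Y S"
    and "r \<in> semijoin Dom X Y (supp R) (supp S)"
  shows "marg (Kjoin Dom X Y R S) X r = cstar S (X \<inter> Y) * R r"
proof -
  define Z where "Z = X \<inter> Y"
  define z where "z = r |` Z"
  obtain t0 where t0: "t0 \<in> Tup Dom (X \<union> Y)" "t0 |` X \<in> supp R" "t0 |` Y \<in> supp S" "r = t0 |` X"
    using assms(6) unfolding semijoin_def rjoin_def by auto
  have rT: "r \<in> Tup Dom X" using assms(4) t0 unfolding is_Krel_def by auto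
  have domr: "dom r = X" using rT unfolding Tup_def by auto
  have rR: "R r \<noteq> 0" using t0 unfolding supp_def by auto
  define B where "B = {s \<in> supp S. s |` Z = z}"
  have finS: "finite (supp S)" and SY: "supp S \<subseteq> Tup Dom Y" using assms(5) unfolding is_Krel_def by auto
  have finB: "finite B" using finS unfolding B_def by auto
  define s0 where "s0 = t0 |` Y"
  have s0B: "s0 \<in> B"
    unfolding B_def s0_def z_def Z_def using t0 by (auto simp: restrict_map_def fun_eq_iff)
  have margz: "marg S Z z = sum S B" unfolding marg_def B_def by simp
  have margnz: "marg S Z z \<noteq> 0"
  proof
    assume "marg S Z z = 0"
    then have "S s0 = 0" using sum_zero_pos[OF assms(1) finB] s0B margz by auto
    then show False using s0B unfolding B_def supp_def by auto
  qed
  have finM: "finite (supp (marg S Z))"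
  proof (rule finite_subset[OF _ finite_imageI[OF finS, of "\<lambda>s. s |` Z"]])
    show "supp (marg S Z) \<subseteq> (\<lambda>s. s |` Z) ` supp S"
    proof
      fix u assume "u \<in> supp (marg S Z)"
      then have "marg S Z u \<noteq> 0" unfolding supp_def by simp
      then have "{r \<in> supp S. r |` Z = u} \<noteq> {}" unfolding marg_def by (rule contrapos_nn) (simp only: sum.empty)
      then show "u \<in> (\<lambda>s. s |` Z) ` supp S" by blast
    qed
  qed
  have zM: "z \<in> supp (marg S Z)" using margnz unfolding supp_def by simp
  have cst: "cstar S Z = marg S Z z * cfac S Z z"
    unfolding cstar_def cfac_def using prod.remove[OF finM zM] by simp
  define h where "h s = r ++ s" for s
  have Bprops: "dom s = Y \<and> s |` Z = r |` Z \<and> s \<in> Tup Dom Y" if "s \<in> B" for s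
    using that SY unfolding B_def z_def Tup_def by auto
  have hY: "h s |` Y = s" if "s \<in> B" for s
    using Bprops[OF that] restr_add_Y unfolding h_def by blast
  have hX: "h s |` X = r" if "s \<in> B" for s
    using Bprops[OF that] restr_add_X[of s Y r X] domr unfolding h_def Z_def by blast
  have hT: "h s \<in> Tup Dom (X \<union> Y)" if "s \<in> B" for s
  proof -
    have ds: "dom s = Y" "s \<in> Tup Dom Y" using Bprops[OF that] by auto
    have "dom (h s) = X \<union> Y" unfolding h_def using ds domr by auto
    moreover have "\<forall>A\<in>X \<union> Y. the (h s A) \<in> Dom A"
    proof
      fix A assume A: "A \<in> X \<union> Y"
      show "the (h s A) \<in> Dom A"
      proof (cases "A \<in> Y")
        case True
        then have "h s A = s A" using hY[OF that] by (metis restrict_in)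
        then show ?thesis using ds True unfolding Tup_def by auto
      next
        case False
        then have "A \<in> X" using A by auto
        then have "h s A = r A" using hX[OF that] by (metis restrict_in)
        then show ?thesis using rT \<open>A \<in> X\<close> unfolding Tup_def by auto
      qed
    qed
    ultimately show ?thesis unfolding Tup_def by auto
  qed
  have inj: "inj_on h B"
    by (rule inj_onI) (metis hY)
  define J where "J = Kjoin Dom X Y R S"
  have Jh: "J (h s) = R r * S s * cfac S Z z" if "s \<in> B" for s
  proof -
    have "h s |` Z = z"
      using hX[OF that] unfolding z_def Z_def by (metis Int_lower1 restrict_restrict inf.absorb_iff2 inf_commute)
    then show ?thesis unfolding J_def Kjoin_def using hT[OF that] hX[OF that] hY[OF that]
      by (simp add: Z_def)
  qed
  have sub: "{t \<in> supp J. t |` X = r} \<subseteq> h ` B"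
  proof
    fix t assume "t \<in> {t \<in> supp J. t |` X = r}"
    then have tJ: "J t \<noteq> 0" and tX: "t |` X = r" unfolding supp_def by auto
    then have tT: "t \<in> Tup Dom (X \<union> Y)" and St: "S (t |` Y) \<noteq> 0"
      unfolding J_def Kjoin_def by (auto split: if_splits)
    have "t |` Y \<in> B" unfolding B_def supp_def z_def Z_def using St tX
      by (auto simp: restrict_map_def fun_eq_iff) (metis)
    moreover have "t = h (t |` Y)" unfolding h_def using decomp[of t X Y r] tT tX unfolding Tup_def by auto
    ultimately show "t \<in> h ` B" by blast
  qed
  have "marg J X r = sum J (h ` B)"
    unfolding marg_def
  proof (rule sum.mono_neutral_left[OF finite_imageI[OF finB] sub])
    show "\<forall>i\<in>h ` B - {t \<in> supp J. t |` X = r}. J i = 0"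
      using hX unfolding supp_def by auto
  qed
  also have "\<dots> = sum (J \<circ> h) B" using sum.reindex[OF inj] by simp
  also have "\<dots> = sum (\<lambda>s. R r * S s * cfac S Z z) B" by (rule sum.cong) (auto simp: Jh)
  also have "\<dots> = R r * cfac S Z z * sum S B"
    by (simp add: sum_distrib_left sum_distrib_right mult_ac)
  also have "\<dots> = cstar S Z * R r" using cst margz by (simp add: mult_ac)
  finally show ?thesis unfolding J_def Z_def .
qed

end
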